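(* For every integer $\chi\geq 6$ and every positive integer $N$, there exists a family $\mathcal{F}$ of at least $N$ pairwise non-isomorphic finite graphs such that every $G\in\mathcal{F}$ has chromatic number $\chi$ and no frozen vertices, and $\mathcal{C}_\chi(G)\cong\mathcal{C}_\chi(G')$ for all $G,G'\in\mathcal{F}$.
   Context: All graphs are finite and simple. For a positive integer $k$, a (proper) $k$-colouring of $G$ is a map $c:V(G)\to\{1,\dots,k\}$ with $c(u)\neq c(v)$ for every edge $uv$; $\chi(G)$ is the chromatic number. The $k$-recolouring graph $\mathcal{C}_k(G)$ is the graph whose vertices are all $k$-colourings of $G$, two colourings being adjacent if and only if they differ at exactly one vertex. A vertex $v$ of $G$ is frozen if for every $\chi(G)$-colouring $c$ of $G$, every colour in $\{1,\dots,\chi(G)\}$ appears on the closed neighbourhood of $v$ (so $v$ can never be recoloured); otherwise $v$ is recolourable. *)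

theory Defs
  imports Main
begin

text \<open>A finite simple graph on natural-number vertices: a pair (V, E) with V finite
  and E a symmetric irreflexive relation on V (edges as ordered pairs, both directions).\<close>
type_synonym graph = "nat set \<times> (nat \<times> nat) set"

definition simple_graph :: "graph \<Rightarrow> bool" where
  "simple_graph G \<longleftrightarrow> finite (fst G) \<and> snd G \<subseteq> fst G \<times> fst G \<and> sym (snd G) \<and> irrefl (snd G)"

definition adj :: "graph \<Rightarrow> nat \<Rightarrow> nat \<Rightarrow> bool" where
  "adj G u v \<longleftrightarrow> (u, v) \<in> snd G"

text \<open>Proper k-colourings, as maps V \<rightarrow> {1..k}, extended by 0 outside V so that
  they are uniquely represented.\<close>
definition colourings :: "nat \<Rightarrow> graph \<Rightarrow> (nat \<Rightarrow> nat) set" where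
  "colourings k G = {c. (\<forall>v\<in>fst G. c v \<in> {1..k}) \<and> (\<forall>v. v \<notin> fst G \<longrightarrow> c v = 0)
                         \<and> (\<forall>u v. adj G u v \<longrightarrow> c u \<noteq> c v)}"

definition chromatic_number :: "graph \<Rightarrow> nat" where
  "chromatic_number G = (LEAST k. colourings k G \<noteq> {})"

definition iso :: "'a set \<Rightarrow> ('a \<Rightarrow> 'a \<Rightarrow> bool) \<Rightarrow> 'b set \<Rightarrow> ('b \<Rightarrow> 'b \<Rightarrow> bool) \<Rightarrow> bool" where
  "iso V1 A1 V2 A2 \<longleftrightarrow> (\<exists>f. bij_betw f V1 V2 \<and> (\<forall>x\<in>V1. \<forall>y\<in>V1. A1 x y \<longleftrightarrow> A2 (f x) (f y)))"

definition graph_iso :: "graph \<Rightarrow> graph \<Rightarrow> bool" where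
  "graph_iso G H \<longleftrightarrow> iso (fst G) (adj G) (fst H) (adj H)"

definition recol_adj :: "nat \<Rightarrow> graph \<Rightarrow> (nat \<Rightarrow> nat) \<Rightarrow> (nat \<Rightarrow> nat) \<Rightarrow> bool" where
  "recol_adj k G c d \<longleftrightarrow> card {v \<in> fst G. c v \<noteq> d v} = 1"

definition recol_iso :: "nat \<Rightarrow> graph \<Rightarrow> graph \<Rightarrow> bool" where
  "recol_iso k G H \<longleftrightarrow> iso (colourings k G) (recol_adj k G) (colourings k H) (recol_adj k H)"

definition frozen :: "graph \<Rightarrow> nat \<Rightarrow> bool" where
  "frozen G v \<longleftrightarrow> (\<forall>c \<in> colourings (chromatic_number G) G.
      {1..chromatic_number G} \<subseteq> c ` ({v} \<union> {u. adj G v u}))"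

end

theory Submission
  imports Defs
begin

definition cyc :: "nat \<Rightarrow> nat \<Rightarrow> nat \<Rightarrow> bool" where
  "cyc n i j \<longleftrightarrow> j = i+1 \<or> i = j+1 \<or> (i=0 \<and> j=n-1) \<or> (j=0 \<and> i=n-1)"

definition cc :: "nat \<Rightarrow> nat \<Rightarrow> nat \<Rightarrow> bool" where
  "cc n i j \<longleftrightarrow> i<n \<and> j<n \<and> i\<noteq>j \<and> \<not> cyc n i j"

definition ff :: "nat \<Rightarrow> nat \<Rightarrow> nat \<Rightarrow> nat \<Rightarrow> nat" where
  "ff m n s i = (if i = s then m else ((if s \<le> i then i - s else i + n - s) + 1) div 2)"

lemma ff_range:
  assumes "m \<ge> 2" "n = 2*m-1" "s < n" "i < n"
  shows "1 \<le> ff m n s i \<and> ff m n s i \<le> m \<and> (ff m n s i = m \<longleftrightarrow> i = s)"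
  using assms unfolding ff_def by (auto split: if_splits; presburger)

lemma ff_proper:
  assumes "m \<ge> 2" "n = 2*m-1" "s < n" "i < n" "j < n" "i \<noteq> j" "ff m n s i = ff m n s j"
  shows "cyc n i j"
proof -
  have "i \<noteq> s" using ff_range[OF assms(1-3) assms(4)] ff_range[OF assms(1-3) assms(5)] assms(6,7) by auto
  moreover have "j \<noteq> s" using ff_range[OF assms(1-3) assms(4)] ff_range[OF assms(1-3) assms(5)] assms(6,7) by auto
  ultimately show ?thesis using assms unfolding ff_def cyc_def by (auto split: if_splits; presburger)
qed

lemma three_cyc:
  assumes "n \<ge> 4" "a<n" "b<n" "d<n" "a\<noteq>b" "a\<noteq>d" "b\<noteq>d" "cyc n a b" "cyc n a d" "cyc n b d"
  shows False
  using assms unfolding cyc_def by arith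

lemma cc_lower:
  fixes c :: "nat \<Rightarrow> nat"
  assumes "n \<ge> 4" "\<And>i j. cc n i j \<Longrightarrow> c (off+i) \<noteq> c (off+j)"
  shows "n \<le> 2 * card (c ` {off..<off+n})"
proof -
  let ?A = "{off..<off+n}"
  let ?F = "\<lambda>y. {x\<in>?A. c x = y}"
  have fib: "card (?F y) \<le> 2" for y
  proof (rule ccontr)
    assume "\<not> card (?F y) \<le> 2"
    hence "Suc (Suc (Suc 0)) \<le> card (?F y)" by simp
    then obtain a B where B: "?F y = insert a B" "a \<notin> B" "Suc (Suc 0) \<le> card B"
      using card_le_Suc_iff[of "Suc (Suc 0)" "?F y"] by blast
    then obtain b D where D: "B = insert b D" "b \<notin> D" "Suc 0 \<le> card D"
      using card_le_Suc_iff[of "Suc 0" B] by blast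
    then obtain d E where E: "D = insert d E" "d \<notin> E"
      using card_le_Suc_iff[of 0 D] by blast
    have mem: "a \<in> ?F y" "b \<in> ?F y" "d \<in> ?F y" using B D E by auto
    have ne: "a \<noteq> b" "a \<noteq> d" "b \<noteq> d" using B D E by auto
    have cy: "cyc n (x - off) (z - off)" if "x \<in> ?F y" "z \<in> ?F y" "x \<noteq> z" for x z
    proof (rule ccontr)
      assume "\<not> cyc n (x - off) (z - off)"
      hence "cc n (x-off) (z-off)" using that unfolding cc_def by auto
      from assms(2)[OF this] that show False by auto
    qed
    have r: "a-off < n" "b-off < n" "d-off < n" using mem by auto
    have r2: "a-off \<noteq> b-off" "a-off \<noteq> d-off" "b-off \<noteq> d-off" using mem ne by auto
    show False
      using three_cyc[OF assms(1) r r2 cy[OF mem(1) mem(2) ne(1)]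
        cy[OF mem(1) mem(3) ne(2)] cy[OF mem(2) mem(3) ne(3)]] .
  qed
  have "?A = (\<Union>y\<in>c ` ?A. ?F y)" by auto
  hence "card ?A \<le> (\<Sum>y\<in>c ` ?A. card (?F y))" using card_UN_le[of "c ` ?A" ?F] by simp
  also have "\<dots> \<le> (\<Sum>y\<in>c ` ?A. 2)" by (rule sum_mono) (use fib in auto)
  finally show ?thesis by simp
qed

definition nQ :: "nat \<Rightarrow> nat" where "nQ k = 2*(k-3)-1"
definition uu :: "nat \<Rightarrow> nat" where "uu k = 5 + nQ k"

definition R0 :: "nat \<Rightarrow> nat \<Rightarrow> nat \<Rightarrow> nat \<Rightarrow> bool" where
  "R0 k N x y \<longleftrightarrow>
     (x<5 \<and> y<5 \<and> cc 5 x y)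
   \<or> (5\<le>x \<and> 5\<le>y \<and> cc (nQ k) (x-5) (y-5))
   \<or> (x<5 \<and> 5\<le>y \<and> y<uu k) \<or> (y<5 \<and> 5\<le>x \<and> x<uu k)
   \<or> (x = uu k \<and> 5\<le>y \<and> y<uu k) \<or> (y = uu k \<and> 5\<le>x \<and> x<uu k)
   \<or> (uu k < x \<and> x \<le> uu k + N \<and> y<5) \<or> (uu k < y \<and> y \<le> uu k + N \<and> x<5)"

definition ExE :: "nat \<Rightarrow> nat \<Rightarrow> nat \<Rightarrow> nat \<Rightarrow> bool" where
  "ExE k j x y \<longleftrightarrow> (x = uu k \<and> uu k < y \<and> y \<le> uu k + j) \<or> (y = uu k \<and> uu k < x \<and> x \<le> uu k + j)"

definition R :: "nat \<Rightarrow> nat \<Rightarrow> nat \<Rightarrow> nat \<Rightarrow> nat \<Rightarrow> bool" where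
  "R k N j x y \<longleftrightarrow> R0 k N x y \<or> ExE k j x y"

definition GG :: "nat \<Rightarrow> nat \<Rightarrow> nat \<Rightarrow> graph" where
  "GG k N j = ({..uu k + N}, {(x,y). R k N j x y})"

lemma adj_GG: "adj (GG k N j) x y \<longleftrightarrow> R k N j x y"
  by (simp add: adj_def GG_def)

lemma fst_GG: "fst (GG k N j) = {..uu k + N}" by (simp add: GG_def)

lemma cyc_sym: "cyc n i j \<Longrightarrow> cyc n j i" unfolding cyc_def by auto
lemma cc_sym: "cc n i j \<Longrightarrow> cc n j i" unfolding cc_def using cyc_sym by blast

lemma nQ_ge: "k \<ge> 6 \<Longrightarrow> nQ k \<ge> 5 \<and> nQ k = 2*(k-3)-1" unfolding nQ_def by auto

lemma cc_comm: "cc n i j = cc n j i" using cc_sym by blast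

lemma R0_sym: "R0 k N x y \<Longrightarrow> R0 k N y x"
  unfolding R0_def by (elim disjE; simp add: cc_comm)

lemma R_sym: "R k N j x y \<Longrightarrow> R k N j y x"
  unfolding R_def using R0_sym[of k N x y] unfolding ExE_def by blast

lemma R_irrefl: "\<not> R k N j x x"
  unfolding R_def R0_def ExE_def cc_def uu_def by simp

lemma R_mono: "j \<le> j' \<Longrightarrow> R k N j x y \<Longrightarrow> R k N j' x y"
  unfolding R_def ExE_def by auto

lemma R_bound: "j \<le> N \<Longrightarrow> R k N j x y \<Longrightarrow> x \<le> uu k + N \<and> y \<le> uu k + N"
  unfolding R_def R0_def ExE_def cc_def uu_def by (elim disjE; auto)

lemma simple_GG: "j \<le> N \<Longrightarrow> simple_graph (GG k N j)"
  unfolding simple_graph_def GG_def sym_def irrefl_def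
  using R_sym R_irrefl R_bound by auto

lemma col_mono: "j \<le> j' \<Longrightarrow> colourings m (GG k N j') \<subseteq> colourings m (GG k N j)"
  unfolding colourings_def adj_GG fst_GG using R_mono by blast

lemma R_PQ: "x<5 \<Longrightarrow> 5\<le>y \<Longrightarrow> y<uu k \<Longrightarrow> R k N j x y" unfolding R_def R0_def by simp
lemma R_uQ: "5\<le>y \<Longrightarrow> y<uu k \<Longrightarrow> R k N j (uu k) y" unfolding R_def R0_def by simp
lemma R_WP: "uu k < w \<Longrightarrow> w \<le> uu k+N \<Longrightarrow> y<5 \<Longrightarrow> R k N j w y" unfolding R_def R0_def by simp
lemma R_P: "cc 5 i i' \<Longrightarrow> R k N j i i'" unfolding R_def R0_def by (simp add: cc_def)
lemma R_Q: "cc (nQ k) i i' \<Longrightarrow> R k N j (5+i) (5+i')" unfolding R_def R0_def by simp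
lemma R_uW: "uu k < w \<Longrightarrow> w \<le> uu k + j \<Longrightarrow> R k N j (uu k) w" unfolding R_def ExE_def by simp
lemma R0_R: "R0 k N x y \<Longrightarrow> R k N j x y" unfolding R_def by simp

lemma lower:
  assumes k: "k \<ge> 6" and c: "c \<in> colourings m (GG k N 0)"
  shows "k \<le> m \<and> (m = k \<longrightarrow> (\<forall>w. uu k < w \<and> w \<le> uu k + N \<longrightarrow> c (uu k) \<noteq> c w))"
proof -
  have prp: "R k N 0 x y \<Longrightarrow> c x \<noteq> c y" for x y using c unfolding colourings_def adj_GG by auto
  have rng: "x \<le> uu k + N \<Longrightarrow> c x \<in> {1..m}" for x using c unfolding colourings_def fst_GG by auto
  have nq: "nQ k \<ge> 5" "nQ k = 2*(k-3)-1" using nQ_ge[OF k] by auto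
  let ?P = "c ` {0..<0+5}" and ?Q = "c ` {5..<5+nQ k}"
  have "5 \<le> 2 * card ?P"
    by (rule cc_lower) (auto intro!: prp R_P)
  hence cP: "card ?P \<ge> 3" by simp
  have "nQ k \<le> 2 * card ?Q"
  proof (rule cc_lower)
    show "4 \<le> nQ k" using nq by simp
    fix i j assume "cc (nQ k) i j"
    thus "c (5+i) \<noteq> c (5+j)" by (intro prp R_Q)
  qed
  hence cQ: "card ?Q \<ge> k-3" using nq by simp
  have disj: "?P \<inter> ?Q = {}"
  proof -
    { fix x y assume "x \<in> {0..<0+5}" "y \<in> {5..<5+nQ k}" "c x = c y"
      hence "R k N 0 x y" by (intro R_PQ) (auto simp: uu_def)
      with prp \<open>c x = c y\<close> have False by auto }
    thus ?thesis by blast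
  qed
  have sub: "?P \<union> ?Q \<subseteq> {1..m}" using rng unfolding uu_def by auto
  have "card (?P \<union> ?Q) = card ?P + card ?Q" using disj by (simp add: card_Un_disjoint)
  hence cu: "card (?P \<union> ?Q) \<ge> k" using cP cQ k by linarith
  have "card (?P \<union> ?Q) \<le> m" using card_mono[OF _ sub] by simp
  hence km: "k \<le> m" using cu by linarith
  moreover have "c (uu k) \<noteq> c w" if "m = k" "uu k < w" "w \<le> uu k + N" for w
  proof -
    have eq: "?P \<union> ?Q = {1..m}" using card_subset_eq[OF _ sub] cu that(1) \<open>card (?P \<union> ?Q) \<le> m\<close> by simp
    have "c (uu k) \<in> {1..m}" using rng by simp
    moreover have "c (uu k) \<notin> ?Q"
    proof
      assume "c (uu k) \<in> ?Q"
      then obtain y where "y \<in> {5..<5+nQ k}" "c y = c (uu k)" by auto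
      moreover hence "R k N 0 (uu k) y" by (intro R_uQ) (auto simp: uu_def)
      ultimately show False using prp by metis
    qed
    ultimately have u: "c (uu k) \<in> ?P" using eq by blast
    have "c w \<in> {1..m}" using rng that by simp
    moreover have "c w \<notin> ?P"
    proof
      assume "c w \<in> ?P"
      then obtain y where "y \<in> {0..<0+5}" "c y = c w" by auto
      moreover hence "R k N 0 w y" using that by (intro R_WP) auto
      ultimately show False using prp by metis
    qed
    ultimately have wQ: "c w \<in> ?Q" using eq by blast
    show ?thesis
    proof
      assume "c (uu k) = c w"
      with u wQ have "c w \<in> ?P \<inter> ?Q" by simp
      with disj show False by simp
    qed
  qed
  ultimately show ?thesis by blast
qed

lemma col_eq:
  assumes "k \<ge> 6" "j \<le> N"
  shows "colourings k (GG k N j) = colourings k (GG k N 0)"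
proof
  show "colourings k (GG k N j) \<subseteq> colourings k (GG k N 0)" by (rule col_mono) simp
  have "colourings k (GG k N 0) \<subseteq> colourings k (GG k N N)"
  proof
    fix c assume c: "c \<in> colourings k (GG k N 0)"
    have w: "\<forall>w. uu k < w \<and> w \<le> uu k + N \<longrightarrow> c (uu k) \<noteq> c w" using lower[OF assms(1) c] by simp
    { fix x y assume r: "R k N N x y"
      have "c x \<noteq> c y"
      proof (cases "R0 k N x y")
        case True
        then have "R k N 0 x y" by (rule R0_R)
        with c show ?thesis unfolding colourings_def adj_GG by blast
      next
        case False
        with r have "ExE k N x y" unfolding R_def by simp
        then show ?thesis unfolding ExE_def using w by auto
      qed }
    thus "c \<in> colourings k (GG k N N)" using c unfolding colourings_def adj_GG fst_GG by auto
  qed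
  also have "\<dots> \<subseteq> colourings k (GG k N j)" by (rule col_mono) (rule assms(2))
  finally show "colourings k (GG k N 0) \<subseteq> colourings k (GG k N j)" .
qed

definition col :: "nat \<Rightarrow> nat \<Rightarrow> nat \<Rightarrow> nat \<Rightarrow> nat \<Rightarrow> nat" where
  "col k N s1 s2 x = (if x < 5 then ff 3 5 s1 x else if x < uu k then 3 + ff (k-3) (nQ k) s2 (x-5)
     else if x = uu k then 1 else if x \<le> uu k + N then 4 else 0)"

context
  fixes k N s1 s2 :: nat
  assumes k: "k \<ge> 6" and s1: "s1 < 5" and s2: "s2 < nQ k"
begin

lemma nq: "nQ k \<ge> 5" "nQ k = 2*(k-3)-1" using nQ_ge[OF k] by auto

lemma col_P: "x<5 \<Longrightarrow> 1 \<le> col k N s1 s2 x \<and> col k N s1 s2 x \<le> 3 \<and> (col k N s1 s2 x = 3 \<longleftrightarrow> x = s1)"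
  using ff_range[of 3 5 s1 x] s1 unfolding col_def by simp

lemma col_Q: "5 \<le> x \<Longrightarrow> x < uu k \<Longrightarrow> 4 \<le> col k N s1 s2 x \<and> col k N s1 s2 x \<le> k \<and> (col k N s1 s2 x = k \<longleftrightarrow> x = 5 + s2)"
proof -
  assume x: "5 \<le> x" "x < uu k"
  have x5: "x - 5 < nQ k" using x unfolding uu_def by simp
  have k3: "2 \<le> k - 3" using k by simp
  from ff_range[of "k-3" "nQ k" s2 "x-5", OF k3 nq(2) s2 x5]
  have h: "1 \<le> ff (k-3) (nQ k) s2 (x-5)" "ff (k-3) (nQ k) s2 (x-5) \<le> k-3"
     "ff (k-3) (nQ k) s2 (x-5) = k-3 \<longleftrightarrow> x - 5 = s2" by auto
  have c: "col k N s1 s2 x = 3 + ff (k-3) (nQ k) s2 (x-5)" using x unfolding col_def by simp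
  show ?thesis unfolding c using h x k by (auto; linarith)
qed

lemma col_u: "col k N s1 s2 (uu k) = 1" unfolding col_def uu_def by simp
lemma col_W: "uu k < x \<Longrightarrow> x \<le> uu k + N \<Longrightarrow> col k N s1 s2 x = 4" unfolding col_def uu_def by simp
lemma col_out: "uu k + N < x \<Longrightarrow> col k N s1 s2 x = 0" unfolding col_def uu_def by simp

lemma col_region:
  "x \<le> uu k + N \<Longrightarrow> (x < 5) \<or> (5 \<le> x \<and> x < uu k) \<or> x = uu k \<or> (uu k < x \<and> x \<le> uu k + N)"
  by auto

lemma col_proper:
  assumes r: "R k N N x y" shows "col k N s1 s2 x \<noteq> col k N s1 s2 y"
proof -
  have bx: "x \<le> uu k + N" and "y \<le> uu k + N" using R_bound[OF _ r] by auto
  show ?thesis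
  proof (cases "R0 k N x y")
    case False
    with r have "ExE k N x y" unfolding R_def by simp
    thus ?thesis unfolding ExE_def using col_u col_W by auto
  next
    case True
    note R0 = this[unfolded R0_def]
    show ?thesis
    proof (cases "x<5 \<and> y<5 \<and> cc 5 x y")
      case True
      show ?thesis
      proof
        assume "col k N s1 s2 x = col k N s1 s2 y"
        hence "ff 3 5 s1 x = ff 3 5 s1 y" using True unfolding col_def by simp
        hence "cyc 5 x y" using ff_proper[of 3 5 s1 x y] True s1 unfolding cc_def by simp
        thus False using True unfolding cc_def by simp
      qed
    next
      case nP: False
      show ?thesis
      proof (cases "5\<le>x \<and> 5\<le>y \<and> cc (nQ k) (x-5) (y-5)")
        case True
        hence xy: "x < uu k" "y < uu k" "x-5 \<noteq> y-5" "x-5 < nQ k" "y-5 < nQ k"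
          unfolding cc_def uu_def by auto
        show ?thesis
        proof
          assume "col k N s1 s2 x = col k N s1 s2 y"
          hence "ff (k-3) (nQ k) s2 (x-5) = ff (k-3) (nQ k) s2 (y-5)" using True xy unfolding col_def by simp
          hence "cyc (nQ k) (x-5) (y-5)" using ff_proper[OF _ nq(2) s2 xy(4,5,3)] k by simp
          thus False using True unfolding cc_def by simp
        qed
      next
        case False
        with nP R0 have
          "(x<5 \<and> 5\<le>y \<and> y<uu k) \<or> (y<5 \<and> 5\<le>x \<and> x<uu k)
           \<or> (x = uu k \<and> 5\<le>y \<and> y<uu k) \<or> (y = uu k \<and> 5\<le>x \<and> x<uu k)
           \<or> (uu k < x \<and> x \<le> uu k + N \<and> y<5) \<or> (uu k < y \<and> y \<le> uu k + N \<and> x<5)"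
          by blast
        thus ?thesis
        proof (elim disjE)
          assume a: "x<5 \<and> 5\<le>y \<and> y<uu k" show ?thesis using col_P[of x] col_Q[of y] a by auto
        next
          assume a: "y<5 \<and> 5\<le>x \<and> x<uu k" show ?thesis using col_P[of y] col_Q[of x] a by auto
        next
          assume a: "x = uu k \<and> 5\<le>y \<and> y<uu k" show ?thesis using col_u col_Q[of y] a by auto
        next
          assume a: "y = uu k \<and> 5\<le>x \<and> x<uu k" show ?thesis using col_u col_Q[of x] a by auto
        next
          assume a: "uu k < x \<and> x \<le> uu k + N \<and> y<5" show ?thesis using col_W[of x] col_P[of y] a by auto
        next
          assume a: "uu k < y \<and> y \<le> uu k + N \<and> x<5" show ?thesis using col_W[of y] col_P[of x] a by auto
        qed
      qed
    qed
  qed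
qed

lemma col_in: "col k N s1 s2 \<in> colourings k (GG k N N)"
proof -
  have "col k N s1 s2 x \<in> {1..k}" if "x \<le> uu k + N" for x
  proof -
    from col_region[OF that] show ?thesis
    proof (elim disjE)
      assume "x < 5" thus ?thesis using col_P[of x] k by auto
    next
      assume "5 \<le> x \<and> x < uu k" thus ?thesis using col_Q[of x] by auto
    next
      assume "x = uu k" thus ?thesis using col_u k by auto
    next
      assume "uu k < x \<and> x \<le> uu k + N" thus ?thesis using col_W[of x] k by auto
    qed
  qed
  moreover have "col k N s1 s2 x = 0" if "x \<notin> {..uu k + N}" for x using col_out that by auto
  ultimately show ?thesis unfolding colourings_def fst_GG adj_GG using col_proper by auto
qed


lemma inv_gen:
  assumes "\<And>y. y < 5 \<Longrightarrow> col k N s1 s2 y = cz \<Longrightarrow> P y"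
      and "\<And>y. 5 \<le> y \<Longrightarrow> y < uu k \<Longrightarrow> col k N s1 s2 y = cz \<Longrightarrow> P y"
      and "cz \<noteq> 1" "cz \<noteq> 4" "cz \<noteq> 0"
      and "col k N s1 s2 y = cz"
  shows "P y"
proof (cases "y \<le> uu k + N")
  case True
  from col_region[OF True] show ?thesis
  proof (elim disjE)
    assume "y < 5" thus ?thesis using assms by blast
  next
    assume "5 \<le> y \<and> y < uu k" thus ?thesis using assms by blast
  next
    assume "y = uu k" thus ?thesis using assms col_u by simp
  next
    assume "uu k < y \<and> y \<le> uu k + N" thus ?thesis using assms col_W[of y] by simp
  qed
next
  case False thus ?thesis using assms col_out[of y] by simp
qed

lemma inv3: "col k N s1 s2 y = 3 \<Longrightarrow> y = s1"
  apply (rule inv_gen[where cz=3 and P="\<lambda>z. z = s1"])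
  subgoal for y using col_P[of y] by simp
  subgoal for y using col_Q[of y] by simp
  by simp_all

lemma invk: "col k N s1 s2 y = k \<Longrightarrow> y = 5 + s2"
  apply (rule inv_gen[where cz=k and P="\<lambda>z. z = 5 + s2"])
  subgoal for y using col_P[of y] k by simp
  subgoal for y using col_Q[of y] by simp
  using k by simp_all

lemma inv2: "col k N s1 s2 y = 2 \<Longrightarrow> y < 5"
  apply (rule inv_gen[where cz=2 and P="\<lambda>z. z < 5"])
  subgoal for y by simp
  subgoal for y using col_Q[of y] by simp
  by simp_all

lemma inv5: "col k N s1 s2 y = 5 \<Longrightarrow> 5 \<le> y \<and> y < uu k"
  apply (rule inv_gen[where cz=5 and P="\<lambda>z. 5 \<le> z \<and> z < uu k"])
  subgoal for y using col_P[of y] by simp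
  subgoal for y by simp
  by simp_all

end

lemma col_in_j: "k \<ge> 6 \<Longrightarrow> s1 < 5 \<Longrightarrow> s2 < nQ k \<Longrightarrow> j \<le> N \<Longrightarrow> col k N s1 s2 \<in> colourings k (GG k N j)"
  using col_in[of k s1 s2 N] col_mono[of j N k k N] by blast

lemma chrom: assumes "k \<ge> 6" "j \<le> N" shows "chromatic_number (GG k N j) = k"
  unfolding chromatic_number_def
proof (rule Least_equality)
  have "nQ k \<ge> 5" using nQ_ge[OF assms(1)] by simp
  thus "colourings k (GG k N j) \<noteq> {}" using col_in_j[of k 0 0 j N] assms by auto
next
  fix m assume "colourings m (GG k N j) \<noteq> {}"
  then obtain c where "c \<in> colourings m (GG k N j)" by blast
  hence "c \<in> colourings m (GG k N 0)" using col_mono[of 0 j m k N] by blast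
  thus "k \<le> m" using lower[OF assms(1)] by blast
qed

lemma nf_core:
  assumes k: "k \<ge> 6" and s: "s1 < 5" "s2 < nQ k" and j: "j \<le> N" and cz: "cz \<in> {1..k}"
    and h: "\<And>y. y = v \<or> R k N N v y \<Longrightarrow> col k N s1 s2 y \<noteq> cz"
  shows "\<not> frozen (GG k N j) v"
proof
  assume "frozen (GG k N j) v"
  hence "{1..k} \<subseteq> col k N s1 s2 ` ({v} \<union> {u. adj (GG k N j) v u})"
    unfolding frozen_def chrom[OF k j] using col_in_j[OF k s j] by blast
  with cz obtain y where "y = v \<or> R k N j v y" "col k N s1 s2 y = cz" unfolding adj_GG by blast
  thus False using h R_mono[OF j] by blast
qed

lemma noR_P: "v < 5 \<Longrightarrow> y < 5 \<Longrightarrow> cyc 5 v y \<Longrightarrow> \<not> R k N j v y"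
  unfolding R_def R0_def ExE_def cc_def uu_def by simp

lemma noR_Q: "5 \<le> v \<Longrightarrow> v < uu k \<Longrightarrow> 5 \<le> y \<Longrightarrow> y < uu k \<Longrightarrow> cyc (nQ k) (v-5) (y-5) \<Longrightarrow> \<not> R k N j v y"
  unfolding R_def R0_def ExE_def cc_def uu_def by simp

lemma noR_u: "y < 5 \<Longrightarrow> \<not> R k N j (uu k) y"
  unfolding R_def R0_def ExE_def cc_def uu_def by simp

lemma noR_W: "uu k < v \<Longrightarrow> 5 \<le> y \<Longrightarrow> y < uu k \<Longrightarrow> \<not> R k N j v y"
  unfolding R_def R0_def ExE_def cc_def uu_def by simp

lemma nonfrozen:
  assumes k: "k \<ge> 6" and j: "j \<le> N" and v: "v \<le> uu k + N"
  shows "\<not> frozen (GG k N j) v"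
proof -
  have nq: "nQ k \<ge> 5" using nQ_ge[OF k] by simp
  have "v < 5 \<or> (5 \<le> v \<and> v < uu k) \<or> v = uu k \<or> (uu k < v \<and> v \<le> uu k + N)" using v by auto
  then show ?thesis
  proof (elim disjE)
    assume v5: "v < 5"
    define s1 where "s1 = (if v < 4 then v+1 else 0)"
    have s1: "s1 < 5" "s1 \<noteq> v" "cyc 5 v s1" unfolding s1_def cyc_def using v5 by auto
    show ?thesis
    proof (rule nf_core[OF k s1(1) _ j, of 0 3])
      show "0 < nQ k" using nq by simp
      show "3 \<in> {1..k}" using k by simp
      fix y assume y: "y = v \<or> R k N N v y"
      show "col k N s1 0 y \<noteq> 3"
      proof
        assume "col k N s1 0 y = 3"
        hence "y = s1" using inv3[OF k s1(1), of 0 N y] nq by simp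
        thus False using y s1 noR_P[OF v5 s1(1) s1(3)] by blast
      qed
    qed
  next
    assume vq: "5 \<le> v \<and> v < uu k"
    define s2 where "s2 = (if v - 5 + 1 < nQ k then v - 5 + 1 else 0)"
    have vq': "v - 5 < nQ k" using vq unfolding uu_def by linarith
    have s2: "s2 < nQ k" "5 + s2 \<noteq> v" "cyc (nQ k) (v-5) s2" "5 + s2 < uu k"
      unfolding s2_def cyc_def uu_def using vq vq' nq by auto
    show ?thesis
    proof (rule nf_core[OF k _ s2(1) j, of 0 k])
      show "(0::nat) < 5" by simp
      show "k \<in> {1..k}" using k by simp
      fix y assume y: "y = v \<or> R k N N v y"
      show "col k N 0 s2 y \<noteq> k"
      proof
        assume "col k N 0 s2 y = k"
        hence "y = 5 + s2" using invk[OF k _ s2(1), of 0 N y] by simp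
        thus False using y s2 noR_Q[of v k "5+s2" N N] vq by auto
      qed
    qed
  next
    assume vu: "v = uu k"
    show ?thesis
    proof (rule nf_core[OF k _ _ j, of 0 0 2])
      show "(0::nat) < 5" "0 < nQ k" using nq by auto
      show "2 \<in> {1..k}" using k by simp
      fix y assume y: "y = v \<or> R k N N v y"
      show "col k N 0 0 y \<noteq> 2"
      proof
        assume "col k N 0 0 y = 2"
        hence "y < 5" using inv2[OF k, of 0 0 N y] nq by simp
        moreover have "y \<noteq> v" using vu \<open>y < 5\<close> unfolding uu_def by simp
        ultimately show False using y vu noR_u[of y k N N] by blast
      qed
    qed
  next
    assume vw: "uu k < v \<and> v \<le> uu k + N"
    show ?thesis
    proof (rule nf_core[OF k _ _ j, of 0 0 5])
      show "(0::nat) < 5" "0 < nQ k" using nq by auto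
      show "5 \<in> {1..k}" using k by simp
      fix y assume y: "y = v \<or> R k N N v y"
      show "col k N 0 0 y \<noteq> 5"
      proof
        assume "col k N 0 0 y = 5"
        hence yq: "5 \<le> y \<and> y < uu k" using inv5[OF k, of 0 0 N y] nq by simp
        hence "y \<noteq> v" using vw by simp
        thus False using y yq vw noR_W[of k v y N N] by blast
      qed
    qed
  qed
qed

lemma iso_card:
  assumes "graph_iso G H" "simple_graph G" "simple_graph H"
  shows "card (snd G) = card (snd H)"
proof -
  obtain f where f: "bij_betw f (fst G) (fst H)" "\<forall>x\<in>fst G. \<forall>y\<in>fst G. adj G x y \<longleftrightarrow> adj H (f x) (f y)"
    using assms(1) unfolding graph_iso_def iso_def by blast
  have EG: "snd G \<subseteq> fst G \<times> fst G" and EH: "snd H \<subseteq> fst H \<times> fst H"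
    using assms(2,3) unfolding simple_graph_def by auto
  have inj: "inj_on (map_prod f f) (snd G)"
    using map_prod_inj_on[of f "fst G" f "fst G"] f(1) EG unfolding bij_betw_def
    by (meson inj_on_subset)
  have "map_prod f f ` snd G = snd H"
  proof
    show "map_prod f f ` snd G \<subseteq> snd H"
    proof
      fix p assume "p \<in> map_prod f f ` snd G"
      then obtain x y where xy: "(x,y) \<in> snd G" "p = (f x, f y)" by auto
      hence "x \<in> fst G" "y \<in> fst G" using EG by auto
      with xy f(2) show "p \<in> snd H" unfolding adj_def by auto
    qed
  next
    show "snd H \<subseteq> map_prod f f ` snd G"
    proof
      fix p assume p: "p \<in> snd H"
      then obtain a b where ab: "p = (a,b)" "a \<in> fst H" "b \<in> fst H" using EH by auto
      then obtain x y where "x \<in> fst G" "y \<in> fst G" "a = f x" "b = f y"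
        using f(1) unfolding bij_betw_def by blast
      with p ab f(2) show "p \<in> map_prod f f ` snd G" unfolding adj_def by force
    qed
  qed
  with inj show ?thesis using card_image by fastforce
qed

lemma edge_less:
  assumes "j < j'" "j' \<le> N"
  shows "card (snd (GG k N j)) < card (snd (GG k N j'))"
proof (rule psubset_card_mono)
  have "snd (GG k N j') \<subseteq> fst (GG k N j') \<times> fst (GG k N j')"
    using simple_GG[OF assms(2), of k] unfolding simple_graph_def by auto
  thus "finite (snd (GG k N j'))" by (rule finite_subset) (simp add: fst_GG)
  have sub: "snd (GG k N j) \<subseteq> snd (GG k N j')" unfolding GG_def using R_mono[of j j'] assms by auto
  have "(uu k, uu k + j') \<in> snd (GG k N j')" unfolding GG_def using R_uW[of k "uu k + j'" j' N] assms by simp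
  moreover have "(uu k, uu k + j') \<notin> snd (GG k N j)" unfolding GG_def R_def R0_def ExE_def cc_def uu_def
    using assms by simp
  ultimately show "snd (GG k N j) \<subset> snd (GG k N j')" using sub by blast
qed

theorem theorem1p4:
  fixes \<chi> N :: nat
  assumes "\<chi> \<ge> 6" and "N \<ge> 1"
  shows "\<exists>\<F> :: graph set. finite \<F> \<and> card \<F> \<ge> N
     \<and> (\<forall>G\<in>\<F>. simple_graph G \<and> chromatic_number G = \<chi> \<and> (\<forall>v\<in>fst G. \<not> frozen G v))
     \<and> (\<forall>G\<in>\<F>. \<forall>G'\<in>\<F>. G \<noteq> G' \<longrightarrow> \<not> graph_iso G G')
     \<and> (\<forall>G\<in>\<F>. \<forall>G'\<in>\<F>. recol_iso \<chi> G G')"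
proof -
  let ?G = "GG \<chi> N"
  let ?F = "?G ` {..<N}"
  have neq: "card (snd (?G j)) \<noteq> card (snd (?G j'))" if "j < N" "j' < N" "j \<noteq> j'" for j j'
  proof (cases "j < j'")
    case True thus ?thesis using edge_less[of j j' N \<chi>] that by simp
  next
    case False hence "j' < j" using that by simp
    thus ?thesis using edge_less[of j' j N \<chi>] that by simp
  qed
  have inj: "inj_on ?G {..<N}"
  proof (rule inj_onI)
    fix j j' assume "j \<in> {..<N}" "j' \<in> {..<N}" "?G j = ?G j'"
    thus "j = j'" using neq by fastforce
  qed
  have "card ?F = N" using card_image[OF inj] by simp
  moreover have "\<forall>G\<in>?F. simple_graph G \<and> chromatic_number G = \<chi> \<and> (\<forall>v\<in>fst G. \<not> frozen G v)"
  proof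
    fix G assume "G \<in> ?F"
    then obtain j where j: "j < N" "G = ?G j" by auto
    hence jN: "j \<le> N" by simp
    show "simple_graph G \<and> chromatic_number G = \<chi> \<and> (\<forall>v\<in>fst G. \<not> frozen G v)"
      using simple_GG[OF jN] chrom[OF assms(1) jN] nonfrozen[OF assms(1) jN] j(2)
      by (auto simp: fst_GG)
  qed
  moreover have "\<forall>G\<in>?F. \<forall>G'\<in>?F. G \<noteq> G' \<longrightarrow> \<not> graph_iso G G'"
  proof (intro ballI impI)
    fix G G' assume "G \<in> ?F" "G' \<in> ?F" "G \<noteq> G'"
    then obtain j j' where "j < N" "j' < N" "G = ?G j" "G' = ?G j'" "j \<noteq> j'" by auto
    thus "\<not> graph_iso G G'" using neq iso_card simple_GG by (metis less_imp_le)
  qed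
  moreover have "\<forall>G\<in>?F. \<forall>G'\<in>?F. recol_iso \<chi> G G'"
  proof (intro ballI)
    fix G G' assume "G \<in> ?F" "G' \<in> ?F"
    then obtain j j' where jj: "j < N" "j' < N" "G = ?G j" "G' = ?G j'" by auto
    have ceq: "colourings \<chi> G = colourings \<chi> G'"
      using col_eq[OF assms(1), of j N] col_eq[OF assms(1), of j' N] jj by simp
    have aeq: "recol_adj \<chi> G = recol_adj \<chi> G'"
      unfolding recol_adj_def using jj by (simp add: fst_GG)
    show "recol_iso \<chi> G G'"
      unfolding recol_iso_def iso_def ceq aeq
      by (rule exI[of _ id]) simp
  qed
  ultimately show ?thesis by (intro exI[of _ ?F]) auto
qed

end
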